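(* Assume $f$ has a unique global maximizer, contains no weak epistasis, and every order-1 epistasis of $f$ is strict. Then the epistatic graph contains no chordless directed cycle of size greater than $2$.
   Context: Fix $\ell\ge1$, loci $V=\{0,\dots,\ell-1\}$, chromosomes $\vec y\in\{0,1\}^V$, fitness $f:\{0,1\}^V\to\mathbb R$ (maximized) with unique global maximizer $g$. An assignment $A$ is a set of pairs $(v,a)$ with at most one pair per locus; coverage $\mathcal C(A)$; $A[v]$ its allele at $v$. $\Psi_A$ is the set of chromosomes agreeing with $A$ on $\mathcal C(A)$ with maximum fitness among such chromosomes; $\Psi_A[v]=\{\psi_v:\psi\in\Psi_A\}$. Epistasis: for $v\in V$ and nonempty $S\subseteq V\setminus\{v\}$, $S\Rightarrow v$ iff for every $s\in S$ there exists an assignment $A$ with $\mathcal C(A)=S$ and $\Psi_A[v]\neq\Psi_{A\setminus\{(s,A[s])\}}[v]$. An epistasis $S\Rightarrow v$ with $|S|\ge2$ is weak if no nonempty proper subset $T\subsetneq S$ has $T\Rightarrow v$. An order-1 epistasis $\{u\}\Rightarrow v$ is strict, written $u\rightarrow v$, if $\Psi_{\{(u,1-g[u])\}}[v]=\{1-g[v]\}$. The epistatic graph (EG) is the directed graph on $V$ with edge $u\to v$ iff $\{u\}\Rightarrow v$ (under the assumption, iff $u\rightarrow v$). A directed cycle $v_0\rightarrow v_1\rightarrow\cdots\rightarrow v_{c-1}\rightarrow v_0$ of size $c$ (indices mod $c$) is chordless if there are no $i$ and $j\neq i+1 \pmod c$ with $v_i\rightarrow v_j$ (so e.g. in $a\to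 b\to c\to a$, an edge $b\to a$ counts as a chord). *)

theory Defs
  imports Complex_Main
begin

text \<open>Loci are {0..<l}. A chromosome is a function nat => bool that is False outside
  the loci (allele 1 = True, allele 0 = False). A fitness is a real-valued function on
  chromosomes (only its values on chromosomes matter). An assignment is a partial map
  nat => bool option; its coverage is its domain.\<close>

definition chroms :: "nat \<Rightarrow> (nat \<Rightarrow> bool) set" where
  "chroms l = {y. \<forall>i. l \<le> i \<longrightarrow> \<not> y i}"

definition agrees :: "(nat \<Rightarrow> bool option) \<Rightarrow> (nat \<Rightarrow> bool) \<Rightarrow> bool" where
  "agrees A y \<longleftrightarrow> (\<forall>v\<in>dom A. A v = Some (y v))"

definition Psi :: "nat \<Rightarrow> ((nat \<Rightarrow> bool) \<Rightarrow> real) \<Rightarrow> (nat \<Rightarrow> bool option) \<Rightarrow> (nat \<Rightarrow> bool) set" where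
  "Psi l f A = {y \<in> chroms l. agrees A y \<and> (\<forall>z\<in>chroms l. agrees A z \<longrightarrow> f z \<le> f y)}"

definition PsiAt :: "nat \<Rightarrow> ((nat \<Rightarrow> bool) \<Rightarrow> real) \<Rightarrow> (nat \<Rightarrow> bool option) \<Rightarrow> nat \<Rightarrow> bool set" where
  "PsiAt l f A v = (\<lambda>y. y v) ` Psi l f A"

definition epistasis :: "nat \<Rightarrow> ((nat \<Rightarrow> bool) \<Rightarrow> real) \<Rightarrow> nat set \<Rightarrow> nat \<Rightarrow> bool" where
  "epistasis l f S v \<longleftrightarrow> v < l \<and> S \<noteq> {} \<and> S \<subseteq> {..<l} - {v} \<and>
     (\<forall>s\<in>S. \<exists>A. dom A = S \<and> PsiAt l f A v \<noteq> PsiAt l f (A(s := None)) v)"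

definition is_global_max :: "nat \<Rightarrow> ((nat \<Rightarrow> bool) \<Rightarrow> real) \<Rightarrow> (nat \<Rightarrow> bool) \<Rightarrow> bool" where
  "is_global_max l f g \<longleftrightarrow> g \<in> chroms l \<and> (\<forall>z\<in>chroms l. f z \<le> f g)"

definition unique_global_max :: "nat \<Rightarrow> ((nat \<Rightarrow> bool) \<Rightarrow> real) \<Rightarrow> bool" where
  "unique_global_max l f \<longleftrightarrow> (\<exists>!g. is_global_max l f g)"

definition gmax :: "nat \<Rightarrow> ((nat \<Rightarrow> bool) \<Rightarrow> real) \<Rightarrow> (nat \<Rightarrow> bool)" where
  "gmax l f = (THE g. is_global_max l f g)"

definition weak_epistasis :: "nat \<Rightarrow> ((nat \<Rightarrow> bool) \<Rightarrow> real) \<Rightarrow> nat set \<Rightarrow> nat \<Rightarrow> bool" where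
  "weak_epistasis l f S v \<longleftrightarrow> epistasis l f S v \<and> 2 \<le> card S \<and>
     \<not> (\<exists>T. T \<noteq> {} \<and> T \<subset> S \<and> epistasis l f T v)"

definition strict_epistasis :: "nat \<Rightarrow> ((nat \<Rightarrow> bool) \<Rightarrow> real) \<Rightarrow> nat \<Rightarrow> nat \<Rightarrow> bool" where
  "strict_epistasis l f u v \<longleftrightarrow> epistasis l f {u} v \<and>
     PsiAt l f [u \<mapsto> \<not> gmax l f u] v = {\<not> gmax l f v}"

definition eg_edge :: "nat \<Rightarrow> ((nat \<Rightarrow> bool) \<Rightarrow> real) \<Rightarrow> nat \<Rightarrow> nat \<Rightarrow> bool" where
  "eg_edge l f u v \<longleftrightarrow> epistasis l f {u} v"

definition chordless_cycle :: "nat \<Rightarrow> ((nat \<Rightarrow> bool) \<Rightarrow> real) \<Rightarrow> nat list \<Rightarrow> bool" where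
  "chordless_cycle l f cs \<longleftrightarrow> cs \<noteq> [] \<and> distinct cs \<and> set cs \<subseteq> {..<l} \<and>
     (\<forall>i<length cs. eg_edge l f (cs ! i) (cs ! ((i + 1) mod length cs))) \<and>
     (\<forall>i<length cs. \<forall>j<length cs. j \<noteq> (i + 1) mod length cs \<longrightarrow>
        \<not> eg_edge l f (cs ! i) (cs ! j))"

end

theory Submission
  imports Defs
begin

lemma cyc_contra:
  fixes M :: "nat \<Rightarrow> real"
  assumes "0 < c" and "\<And>i. i < c \<Longrightarrow> M i < M (Suc i mod c)"
  shows False
proof -
  have le: "k < c \<Longrightarrow> M 0 \<le> M k" for k
  proof (induction k)
    case 0 then show ?case by simp
  next
    case (Suc k)
    then have "M k < M (Suc k mod c)" using assms(2)[of k] by simp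
    moreover have "Suc k mod c = Suc k" using Suc.prems by simp
    ultimately show ?case using Suc by simp
  qed
  have "M (c - 1) < M (Suc (c - 1) mod c)" using assms(1) by (intro assms(2)) simp
  moreover have "Suc (c - 1) mod c = 0" using assms(1) by simp
  ultimately show False using le[of "c - 1"] assms(1) by simp
qed

theorem lemma6:
  fixes l :: nat and f :: "(nat \<Rightarrow> bool) \<Rightarrow> real"
  assumes "1 \<le> l"
    and "unique_global_max l f"
    and "\<And>S v. \<not> weak_epistasis l f S v"
    and "\<And>u v. epistasis l f {u} v \<Longrightarrow> strict_epistasis l f u v"
  shows "\<not> (\<exists>cs. chordless_cycle l f cs \<and> 2 < length cs)"
proof
  assume "\<exists>cs. chordless_cycle l f cs \<and> 2 < length cs"
  then obtain cs where cc: "chordless_cycle l f cs" and len: "2 < length cs" by blast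
  define c where "c = length cs"
  have cpos: "0 < c" using len c_def by linarith
  define g where "g = gmax l f"
  have gmx: "is_global_max l f g"
    using assms(2) unfolding g_def gmax_def unique_global_max_def by (rule theI')
  have uniq: "\<And>h. is_global_max l f h \<Longrightarrow> h = g"
    using assms(2) gmx unfolding unique_global_max_def by blast
  have Psi0: "Psi l f Map.empty = {g}"
    proof -
    have "Psi l f Map.empty = {h. is_global_max l f h}"
      unfolding Psi_def agrees_def is_global_max_def by simp
    then show ?thesis using gmx uniq by blast
  qed
  have PsiAt0: "PsiAt l f Map.empty v = {g v}" for v
    unfolding PsiAt_def Psi0 by simp
  define A where "A i = [cs ! i \<mapsto> \<not> g (cs ! i)]" for i
  have edge: "\<And>i. i < c \<Longrightarrow> eg_edge l f (cs ! i) (cs ! (Suc i mod c))"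
    using cc unfolding chordless_cycle_def c_def by simp
  have nedge: "\<And>i j. i < c \<Longrightarrow> j < c \<Longrightarrow> j \<noteq> Suc i mod c \<Longrightarrow> \<not> eg_edge l f (cs ! i) (cs ! j)"
    using cc unfolding chordless_cycle_def c_def by simp
  have strict: "PsiAt l f (A i) (cs ! (Suc i mod c)) = {\<not> g (cs ! (Suc i mod c))}" if "i < c" for i
    using assms(4)[OF edge[OF that, unfolded eg_edge_def]]
    unfolding strict_epistasis_def A_def g_def by simp
  have setl: "set cs \<subseteq> {..<l}" and dist: "distinct cs"
    using cc unfolding chordless_cycle_def by auto
  have nonstrict: "PsiAt l f (A i) (cs ! (Suc (Suc i mod c) mod c)) = {g (cs ! (Suc (Suc i mod c) mod c))}"
    if "i < c" for i
  proof -
    let ?k = "Suc (Suc i mod c) mod c"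
    have kc: "?k < c" using cpos by simp
    have kj: "?k \<noteq> Suc i mod c"
    proof (cases "Suc (Suc i mod c) < c")
      case True then show ?thesis by simp
    next
      case False
      then have "Suc (Suc i mod c) = c" using len c_def
        by (metis Suc_lessI mod_less_divisor zero_less_iff_neq_zero not_less_zero)
      then show ?thesis using len c_def by simp
    qed
    have ki: "?k \<noteq> i"
    proof
      assume h: "?k = i"
      show False
      proof (cases "Suc i < c")
        case True
        then have "Suc i mod c = Suc i" by simp
        then have "?k = Suc (Suc i) mod c" by simp
        then show ?thesis using h len c_def True
          by (cases "Suc (Suc i) < c") (auto simp: le_mod_geq)
      next
        case False
        then have "Suc i = c" using that by simp
        then show ?thesis using h len c_def by simp
      qed
    qed
    have ne: "\<not> epistasis l f {cs ! i} (cs ! ?k)"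
      using nedge[OF that kc kj] unfolding eg_edge_def .
    have "cs ! ?k < l" using setl kc c_def by (meson lessThan_iff nth_mem subsetD)
    moreover have "cs ! i < l" using setl that c_def by (meson lessThan_iff nth_mem subsetD)
    moreover have "cs ! i \<noteq> cs ! ?k" using dist ki kc that c_def by (simp add: nth_eq_iff_index_eq)
    ultimately have nn: "\<not> (\<forall>s\<in>{cs ! i}. \<exists>B. dom B = {cs ! i} \<and> PsiAt l f B (cs ! ?k) \<noteq> PsiAt l f (B(s := None)) (cs ! ?k))"
      using ne unfolding epistasis_def by simp
    have dA: "dom (A i) = {cs ! i}" unfolding A_def by simp
    have eA: "(A i)(cs ! i := None) = Map.empty" unfolding A_def by simp
    have "PsiAt l f (A i) (cs ! ?k) = PsiAt l f ((A i)(cs ! i := None)) (cs ! ?k)"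
      using nn dA by blast
    then show ?thesis unfolding eA PsiAt0 .
  qed
  define y where "y i = (SOME y. y \<in> Psi l f (A i))" for i
  have yin: "y i \<in> Psi l f (A i)" if "i < c" for i
  proof -
    have "Psi l f (A i) \<noteq> {}" using strict[OF that] unfolding PsiAt_def by auto
    then show ?thesis unfolding y_def by (simp add: some_in_eq)
  qed
  have step: "f (y i) < f (y (Suc i mod c))" if "i < c" for i
  proof -
    let ?j = "Suc i mod c"
    let ?k = "Suc ?j mod c"
    have jc: "?j < c" using cpos by simp
    have yi: "y i \<in> Psi l f (A i)" using yin[OF that] .
    have yj: "y ?j \<in> Psi l f (A ?j)" using yin[OF jc] .
    have "y i (cs ! ?j) \<in> PsiAt l f (A i) (cs ! ?j)" using yi unfolding PsiAt_def by blast
    then have a1: "y i (cs ! ?j) = (\<not> g (cs ! ?j))" using strict[OF that] by simp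
    have agr: "agrees (A ?j) (y i)" unfolding agrees_def A_def using a1 by simp
    have chi: "y i \<in> chroms l" using yi unfolding Psi_def by simp
    have le: "f (y i) \<le> f (y ?j)" using yj chi agr unfolding Psi_def by blast
    have "f (y i) \<noteq> f (y ?j)"
    proof
      assume eq: "f (y i) = f (y ?j)"
      have "y i \<in> Psi l f (A ?j)" using yj chi agr eq unfolding Psi_def by auto
      then have "y i (cs ! ?k) \<in> PsiAt l f (A ?j) (cs ! ?k)" unfolding PsiAt_def by blast
      then have b1: "y i (cs ! ?k) = (\<not> g (cs ! ?k))" using strict[OF jc] by simp
      have "y i (cs ! ?k) \<in> PsiAt l f (A i) (cs ! ?k)" using yi unfolding PsiAt_def by blast
      then have "y i (cs ! ?k) = g (cs ! ?k)" using nonstrict[OF that] by simp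
      then show False using b1 by simp
    qed
    then show ?thesis using le by simp
  qed
  show False by (rule cyc_contra[of c "\<lambda>i. f (y i)", OF cpos step])
qed

end
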